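(* Let $\mathbb{K}=(K,+,0)$ be a positive commutative monoid and let $H$ be a hypergraph. If $H$ has the local-to-global consistency property for $\mathbb{K}$-relations, then $H$ is acyclic.
   Context: A commutative monoid $\mathbb{K}=(K,+,0)$ is positive if $p+q=0$ implies $p=q=0$; all monoids are assumed to have at least two elements. An attribute $A$ has an associated domain $\mathrm{Dom}(A)$ (attribute domains are arbitrary sets and may be chosen as needed). For a finite set $X$ of attributes, $\mathrm{Tup}(X)$ is the set of functions assigning to each $A\in X$ an element of $\mathrm{Dom}(A)$ ($X$-tuples); for $Y\subseteq X$ and $t\in\mathrm{Tup}(X)$, $t[Y]$ is the restriction of $t$ to $Y$. A $\mathbb{K}$-relation over $X$ is a function $R:\mathrm{Tup}(X)\to K$ whose support $R'=\{t:R(t)\neq 0\}$ is finite. For $Y\subseteq X$ the marginal $R[Y]$ is the $\mathbb{K}$-relation over $Y$ with $R[Y](t)=\sum_{r\in R',\,r[Y]=t}R(r)$. For a sequence $X_1,\dots,X_m$ of finite attribute sets (a schema) and $\mathbb{K}$-relations $R_i$ over $X_i$, the collection $R_1,\dots,R_m$ is $k$-wise consistent if for every $q\le k$ and indices $i_1,\dots,i_q\in[m]$ there is a $\mathbb{K}$-relation $W$ over $X_{i_1}\cup\dots\cup X_{i_q}$ with $W[X_{i_j}]=R_{i_j}$ for all $j$; pairwise consistent means $2$-wise, globally consistent means $m$-wise. A hypergraph $H=(V,E)$ (finite, hyperedges non-empty subsets of $V$) is identified with the schema listing its hyperedges, vertices viewed as attributes. $H$ has the local-to-global consistency property for $\mathbb{K}$-relations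 if, for a listing $X_1,\dots,X_m$ of its hyperedges, every pairwise consistent collection of $\mathbb{K}$-relations $R_1(X_1),\dots,R_m(X_m)$ is globally consistent. $H$ is acyclic (in the sense of Beeri, Fagin, Maier, Yannakakis) iff it has a join tree: a tree whose vertices are the hyperedges of $H$ such that for every vertex $v$ of $H$, the hyperedges containing $v$ form a connected subtree. *)

theory Defs
  imports Main "HOL-Library.FuncSet"
begin

definition positive_monoid :: "'k::comm_monoid_add itself \<Rightarrow> bool" where
  "positive_monoid _ \<longleftrightarrow> (\<forall>p q::'k. p + q = 0 \<longrightarrow> p = 0 \<and> q = 0) \<and> (\<exists>x::'k. x \<noteq> 0)"

text \<open>X-tuples over domains Dom are the extensional functions in PiE X Dom.
  A K-relation over X: finitely supported, support contained in Tup(X).\<close>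
definition is_krel :: "('v \<Rightarrow> 'd set) \<Rightarrow> 'v set \<Rightarrow> (('v \<Rightarrow> 'd) \<Rightarrow> 'k::zero) \<Rightarrow> bool" where
  "is_krel Dom X R \<longleftrightarrow> finite {t. R t \<noteq> 0} \<and> (\<forall>t. R t \<noteq> 0 \<longrightarrow> t \<in> PiE X Dom)"

definition marginal :: "(('v \<Rightarrow> 'd) \<Rightarrow> 'k::comm_monoid_add) \<Rightarrow> 'v set \<Rightarrow> ('v \<Rightarrow> 'd) \<Rightarrow> 'k" where
  "marginal R Y = (\<lambda>t. \<Sum>r\<in>{r. R r \<noteq> 0 \<and> restrict r Y = t}. R r)"

definition consistent_on ::
  "('v \<Rightarrow> 'd set) \<Rightarrow> 'v set set \<Rightarrow> ('v set \<Rightarrow> ('v \<Rightarrow> 'd) \<Rightarrow> 'k::comm_monoid_add) \<Rightarrow> bool" where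
  "consistent_on Dom F R \<longleftrightarrow>
     (\<exists>W. is_krel Dom (\<Union>F) W \<and> (\<forall>X\<in>F. marginal W X = R X))"

definition hypergraph :: "'v set \<Rightarrow> 'v set set \<Rightarrow> bool" where
  "hypergraph V E \<longleftrightarrow> finite V \<and> (\<forall>e\<in>E. e \<noteq> {} \<and> e \<subseteq> V)"

definition local_to_global ::
  "'k::comm_monoid_add itself \<Rightarrow> 'd itself \<Rightarrow> 'v set set \<Rightarrow> bool" where
  "local_to_global _ _ E \<longleftrightarrow>
     (\<forall>(Dom::'v \<Rightarrow> 'd set) (R::'v set \<Rightarrow> ('v \<Rightarrow> 'd) \<Rightarrow> 'k).
        (\<forall>X\<in>E. is_krel Dom X (R X)) \<longrightarrow>
        (\<forall>X\<in>E. \<forall>Y\<in>E. consistent_on Dom {X, Y} R) \<longrightarrow>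
        consistent_on Dom E R)"

text \<open>Undirected graph on vertex set N with edge set T (2-element sets); connectivity
  of a vertex subset S within the induced subgraph; trees.\<close>
definition connected_in :: "'a set set \<Rightarrow> 'a set \<Rightarrow> bool" where
  "connected_in T S \<longleftrightarrow>
     (\<forall>a\<in>S. \<forall>b\<in>S. (a, b) \<in> {(x, y). {x, y} \<in> T \<and> x \<in> S \<and> y \<in> S}\<^sup>*)"

definition is_tree :: "'a set \<Rightarrow> 'a set set \<Rightarrow> bool" where
  "is_tree N T \<longleftrightarrow> finite N \<and> N \<noteq> {} \<and>
     T \<subseteq> {{a, b} | a b. a \<in> N \<and> b \<in> N \<and> a \<noteq> b} \<and>
     connected_in T N \<and> card T + 1 = card N"

definition join_tree :: "'v set set \<Rightarrow> 'v set set set \<Rightarrow> bool" where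
  "join_tree E T \<longleftrightarrow> is_tree E T \<and>
     (\<forall>v. connected_in T {e \<in> E. v \<in> e})"

definition acyclic_hg :: "'v set set \<Rightarrow> bool" where
  "acyclic_hg E \<longleftrightarrow> E = {} \<or> (\<exists>T. join_tree E T)"

end

theory Submission
  imports Defs
begin


definition tr :: "'v set set \<Rightarrow> 'v set \<Rightarrow> 'v set set" where
  "tr F S = (\<lambda>X. X \<inter> S) ` F"

definition maxtr :: "'v set set \<Rightarrow> 'v set \<Rightarrow> 'v set set" where
  "maxtr F S = {A \<in> tr F S. \<forall>B\<in>tr F S. A \<subseteq> B \<longrightarrow> A = B}"

definition goodQ :: "'v set set \<Rightarrow> bool" where
  "goodQ F \<longleftrightarrow> (\<forall>S. S \<subseteq> \<Union>F \<longrightarrow> S \<noteq> {} \<longrightarrow> (\<exists>v\<in>S. card {T\<in>maxtr F S. v \<in> T} \<le> 1))"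

lemma connected_in_mono:
  assumes "connected_in T C" "T \<subseteq> T'"
  shows "connected_in T' C"
proof -
  have "{(x, y). {x, y} \<in> T \<and> x \<in> C \<and> y \<in> C} \<subseteq> {(x, y). {x, y} \<in> T' \<and> x \<in> C \<and> y \<in> C}"
    using assms(2) by auto
  then show ?thesis using assms(1) unfolding connected_in_def by (meson rtrancl_mono subsetD)
qed

lemma connected_in_subsing:
  assumes "\<And>a b. a \<in> C \<Longrightarrow> b \<in> C \<Longrightarrow> a = b"
  shows "connected_in T C"
  using assms unfolding connected_in_def by auto

lemma connected_in_leaf:
  assumes "connected_in T C" "A \<in> C"
  shows "connected_in (insert {B, A} T) (insert B C)"
proof -
  let ?R = "{(x, y). {x, y} \<in> T \<and> x \<in> C \<and> y \<in> C}"
  let ?R' = "{(x, y). {x, y} \<in> insert {B, A} T \<and> x \<in> insert B C \<and> y \<in> insert B C}"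
  have sub: "?R \<subseteq> ?R'" by auto
  have BA: "(B, A) \<in> ?R'^*" using assms(2) by auto
  have AB: "(A, B) \<in> ?R'^*" using assms(2) by (auto simp: insert_commute)
  have CC: "(a, b) \<in> ?R'^*" if "a \<in> C" "b \<in> C" for a b
    using assms(1) that rtrancl_mono[OF sub] unfolding connected_in_def by blast
  show ?thesis unfolding connected_in_def
  proof (intro ballI)
    fix a b assume a: "a \<in> insert B C" and b: "b \<in> insert B C"
    show "(a, b) \<in> ?R'^*"
    proof (cases "a = B")
      case True
      then show ?thesis
      proof (cases "b = B")
        case True with \<open>a = B\<close> show ?thesis by simp
      next
        case False
        then have "b \<in> C" using b by auto
        then show ?thesis using True BA CC[OF assms(2)] by (meson rtrancl_trans)
      qed
    next
      case False
      then have aC: "a \<in> C" using a by auto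
      show ?thesis
      proof (cases "b = B")
        case True
        then show ?thesis using CC[OF aC assms(2)] AB by (meson rtrancl_trans)
      next
        case False
        then show ?thesis using CC[OF aC] b by auto
      qed
    qed
  qed
qed

lemma tree_edges_finite:
  assumes "finite N" "T \<subseteq> {{a, b} | a b. a \<in> N \<and> b \<in> N \<and> a \<noteq> b}"
  shows "finite T"
proof -
  have "T \<subseteq> Pow N" using assms(2) by auto
  then show ?thesis using assms(1) finite_subset by blast
qed

lemma is_tree_leaf:
  assumes "is_tree N T" "A \<in> N" "B \<notin> N"
  shows "is_tree (insert B N) (insert {B, A} T)"
proof -
  have fin: "finite N" "N \<noteq> {}" and edges: "T \<subseteq> {{a, b} | a b. a \<in> N \<and> b \<in> N \<and> a \<noteq> b}"
    and con: "connected_in T N" and cd: "card T + 1 = card N"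
    using assms(1) unfolding is_tree_def by auto
  have fT: "finite T" using tree_edges_finite[OF fin(1) edges] .
  have nin: "{B, A} \<notin> T" using edges assms(3) by (auto simp: doubleton_eq_iff)
  have "card (insert {B, A} T) + 1 = card (insert B N)"
    using fT nin fin(1) assms(3) cd by simp
  moreover have "insert {B, A} T \<subseteq> {{a, b} | a b. a \<in> insert B N \<and> b \<in> insert B N \<and> a \<noteq> b}"
    using edges assms(2,3) by blast
  moreover have "connected_in (insert {B, A} T) (insert B N)"
    using connected_in_leaf[OF con assms(2)] .
  ultimately show ?thesis using fin unfolding is_tree_def by auto
qed

lemma connected_in_image:
  assumes "connected_in T C"
  shows "connected_in ((`) g ` T) (g ` C)"
proof -
  let ?R = "{(x, y). {x, y} \<in> T \<and> x \<in> C \<and> y \<in> C}"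
  let ?R' = "{(x, y). {x, y} \<in> (`) g ` T \<and> x \<in> g ` C \<and> y \<in> g ` C}"
  have step: "(g a, g b) \<in> ?R'^*" if "(a, b) \<in> ?R^*" for a b
    using that
  proof (induction rule: rtrancl_induct)
    case base then show ?case by simp
  next
    case (step y z)
    then have "(g y, g z) \<in> ?R'"
      by (auto intro!: image_eqI[where x="{y, z}"])
    then show ?case using step.IH by (meson rtrancl.rtrancl_into_rtrancl)
  qed
  show ?thesis unfolding connected_in_def
    using assms step unfolding connected_in_def by blast
qed

lemma is_tree_image:
  assumes "is_tree N T" "inj_on g N"
  shows "is_tree (g ` N) ((`) g ` T)"
proof -
  have fin: "finite N" "N \<noteq> {}" and edges: "T \<subseteq> {{a, b} | a b. a \<in> N \<and> b \<in> N \<and> a \<noteq> b}"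
    and con: "connected_in T N" and cd: "card T + 1 = card N"
    using assms(1) unfolding is_tree_def by auto
  have fT: "finite T" using tree_edges_finite[OF fin(1) edges] .
  have "inj_on ((`) g) (Pow N)" using assms(2) by (simp add: inj_on_image_Pow)
  moreover have "T \<subseteq> Pow N" using edges by auto
  ultimately have "inj_on ((`) g) T" by (rule inj_on_subset)
  then have c1: "card ((`) g ` T) = card T" by (simp add: card_image)
  have c2: "card (g ` N) = card N" using assms(2) by (simp add: card_image)
  have "(`) g ` T \<subseteq> {{a, b} | a b. a \<in> g ` N \<and> b \<in> g ` N \<and> a \<noteq> b}"
  proof
    fix e assume "e \<in> (`) g ` T"
    then obtain a b where "a \<in> N" "b \<in> N" "a \<noteq> b" "e = {g a, g b}" using edges by auto
    moreover then have "g a \<noteq> g b" using assms(2) by (meson inj_on_contraD)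
    ultimately show "e \<in> {{a, b} | a b. a \<in> g ` N \<and> b \<in> g ` N \<and> a \<noteq> b}" by blast
  qed
  then show ?thesis using fin c1 c2 cd connected_in_image[OF con] unfolding is_tree_def by auto
qed


lemma join_tree_single: "join_tree {{}} {}"
  unfolding join_tree_def is_tree_def connected_in_def by auto

lemma maxtr_remove_sub:
  assumes "A \<in> F" "B \<in> F" "B \<subset> A"
  shows "maxtr (F - {B}) S = maxtr F S"
proof -
  have tr1: "tr (F - {B}) S \<subseteq> tr F S" unfolding tr_def by auto
  have tr2: "Z \<in> tr F S \<Longrightarrow> \<exists>Z'\<in>tr (F - {B}) S. Z \<subseteq> Z'" for Z
  proof -
    assume "Z \<in> tr F S"
    then obtain X where X: "X \<in> F" "Z = X \<inter> S" unfolding tr_def by auto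
    show ?thesis
    proof (cases "X = B")
      case True
      then have "A \<inter> S \<in> tr (F - {B}) S" using assms unfolding tr_def by auto
      then show ?thesis using X True assms(3) by blast
    next
      case False
      then have "Z \<in> tr (F - {B}) S" using X unfolding tr_def by auto
      then show ?thesis by blast
    qed
  qed
  show ?thesis
  proof
    show "maxtr (F - {B}) S \<subseteq> maxtr F S"
    proof
      fix Z assume Z: "Z \<in> maxtr (F - {B}) S"
      then have "Z \<in> tr F S" using tr1 unfolding maxtr_def by auto
      moreover have "\<forall>Y\<in>tr F S. Z \<subseteq> Y \<longrightarrow> Z = Y"
      proof (intro ballI impI)
        fix Y assume "Y \<in> tr F S" "Z \<subseteq> Y"
        then obtain Y' where "Y' \<in> tr (F - {B}) S" "Y \<subseteq> Y'" using tr2 by blast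
        then have "Z = Y'" using Z \<open>Z \<subseteq> Y\<close> unfolding maxtr_def by auto
        then show "Z = Y" using \<open>Z \<subseteq> Y\<close> \<open>Y \<subseteq> Y'\<close> by auto
      qed
      ultimately show "Z \<in> maxtr F S" unfolding maxtr_def by auto
    qed
  next
    show "maxtr F S \<subseteq> maxtr (F - {B}) S"
    proof
      fix Z assume Z: "Z \<in> maxtr F S"
      then obtain Z' where "Z' \<in> tr (F - {B}) S" "Z \<subseteq> Z'" using tr2 unfolding maxtr_def by blast
      moreover then have "Z = Z'" using Z tr1 unfolding maxtr_def by auto
      ultimately show "Z \<in> maxtr (F - {B}) S" using Z tr1 unfolding maxtr_def by auto
    qed
  qed
qed

lemma goodQ_acyclic:
  assumes "finite (\<Union>F)" "goodQ F"
  shows "F = {} \<or> (\<exists>T. join_tree F T)"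
  using assms
proof (induction "card F + card (\<Union>F)" arbitrary: F rule: less_induct)
  case less
  have finF: "finite F" using less.prems(1) by (simp add: finite_UnionD)
  show ?case
  proof (cases "\<Union>F = {}")
    case True
    then have "F \<subseteq> {{}}" by blast
    then have "F = {} \<or> F = {{}}" by blast
    then show ?thesis using join_tree_single by blast
  next
    case nonempty: False
    show ?thesis
    proof (cases "\<exists>A\<in>F. \<exists>B\<in>F. B \<subset> A")
      case True
      then obtain A B where AB: "A \<in> F" "B \<in> F" "B \<subset> A" by blast
      define F' where "F' = F - {B}"
      have UF: "\<Union>F' = \<Union>F" using AB unfolding F'_def by auto
      have cardF: "card F' < card F" unfolding F'_def by (rule card_Diff1_less[OF finF AB(2)])
      have gF': "goodQ F'" unfolding goodQ_def
      proof (intro allI impI)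
        fix S assume "S \<subseteq> \<Union>F'" "S \<noteq> {}"
        then have "\<exists>v\<in>S. card {T \<in> maxtr F S. v \<in> T} \<le> 1"
          using less.prems(2)[unfolded goodQ_def, rule_format, of S] UF by blast
        then show "\<exists>v\<in>S. card {T \<in> maxtr F' S. v \<in> T} \<le> 1"
          unfolding F'_def maxtr_remove_sub[OF AB] .
      qed
      have lt: "card F' + card (\<Union>F') < card F + card (\<Union>F)" using cardF UF by simp
      have "F' = {} \<or> (\<exists>T. join_tree F' T)"
        using less.hyps[OF lt _ gF'] UF less.prems(1) by simp
      moreover have "A \<in> F'" using AB unfolding F'_def by auto
      ultimately obtain T' where T': "join_tree F' T'" by auto
      have FF: "F = insert B F'" "B \<notin> F'" using AB unfolding F'_def by auto
      have "is_tree (insert B F') (insert {B, A} T')"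
        using is_tree_leaf[OF _ \<open>A \<in> F'\<close> FF(2)] T' unfolding join_tree_def by blast
      then have "is_tree F (insert {B, A} T')" using FF(1) by simp
      moreover have "connected_in (insert {B, A} T') {e \<in> F. u \<in> e}" for u
      proof -
        have c: "connected_in T' {e \<in> F'. u \<in> e}" using T' unfolding join_tree_def by blast
        show ?thesis
        proof (cases "u \<in> B")
          case True
          then have eq: "{e \<in> F. u \<in> e} = insert B {e \<in> F'. u \<in> e}" using FF by blast
          have Ain: "A \<in> {e \<in> F'. u \<in> e}" using True AB \<open>A \<in> F'\<close> by blast
          show ?thesis unfolding eq by (rule connected_in_leaf[OF c Ain])
        next
          case False
          then have eq: "{e \<in> F. u \<in> e} = {e \<in> F'. u \<in> e}" using FF by blast
          show ?thesis unfolding eq by (rule connected_in_mono[OF c]) blast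
        qed
      qed
      ultimately show ?thesis unfolding join_tree_def by blast
    next
      case False
      then have sperner: "\<And>A B. A \<in> F \<Longrightarrow> B \<in> F \<Longrightarrow> B \<subseteq> A \<Longrightarrow> B = A" by blast
      have trF: "tr F (\<Union>F) = F"
      proof -
        have "(\<lambda>X. X \<inter> \<Union>F) ` F = (\<lambda>X. X) ` F" by (intro image_cong) auto
        then show ?thesis unfolding tr_def by simp
      qed
      have mF: "maxtr F (\<Union>F) = F" unfolding maxtr_def trF using sperner by blast
      have "\<exists>v\<in>\<Union>F. card {T \<in> maxtr F (\<Union>F). v \<in> T} \<le> 1"
        using less.prems(2)[unfolded goodQ_def, rule_format, of "\<Union>F"] nonempty by blast
      then obtain v where v: "v \<in> \<Union>F" "card {T \<in> F. v \<in> T} \<le> 1"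
        unfolding mF by blast
      obtain M where M: "M \<in> F" "v \<in> M" using v(1) by auto
      have finv: "finite {T \<in> F. v \<in> T}" using finF by simp
      have uniq: "\<And>X. X \<in> F \<Longrightarrow> v \<in> X \<Longrightarrow> X = M"
        using v(2) M card_le_Suc0_iff_eq[OF finv] by auto
      define \<phi> where "\<phi> = (\<lambda>X::'a set. X - {v})"
      define F' where "F' = \<phi> ` F"
      have inj: "inj_on \<phi> F"
      proof (rule inj_onI)
        fix X Y assume XY: "X \<in> F" "Y \<in> F" "\<phi> X = \<phi> Y"
        show "X = Y"
        proof (cases "v \<in> X")
          case True
          then have "X = M" using uniq XY by auto
          show ?thesis
          proof (cases "v \<in> Y")
            case True then show ?thesis using uniq XY \<open>X = M\<close> by auto
          next
            case False
            then have "Y \<subseteq> X" using XY(3) unfolding \<phi>_def by auto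
            then show ?thesis using sperner XY by auto
          qed
        next
          case False
          show ?thesis
          proof (cases "v \<in> Y")
            case True
            then have "X \<subseteq> Y" using XY(3) False unfolding \<phi>_def by auto
            then show ?thesis using sperner XY by auto
          next
            case False2: False
            then show ?thesis using XY(3) False unfolding \<phi>_def by auto
          qed
        qed
      qed
      have UF': "\<Union>F' = \<Union>F - {v}" unfolding F'_def \<phi>_def by auto
      have cF': "card F' = card F" unfolding F'_def using inj by (simp add: card_image)
      have cU: "card (\<Union>F') < card (\<Union>F)" unfolding UF' by (rule card_Diff1_less[OF less.prems(1) v(1)])
      have trF': "tr F' S = tr F S" if "v \<notin> S" for S
        unfolding tr_def F'_def \<phi>_def image_image using that
        by (intro image_cong) auto
      have gF': "goodQ F'" unfolding goodQ_def
      proof (intro allI impI)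
        fix S assume "S \<subseteq> \<Union>F'" "S \<noteq> {}"
        then have "S \<subseteq> \<Union>F" "v \<notin> S" using UF' by auto
        then have "\<exists>v\<in>S. card {T \<in> maxtr F S. v \<in> T} \<le> 1"
          using less.prems(2)[unfolded goodQ_def, rule_format, of S] \<open>S \<noteq> {}\<close> by blast
        moreover have "maxtr F' S = maxtr F S" unfolding maxtr_def trF'[OF \<open>v \<notin> S\<close>] ..
        ultimately show "\<exists>v\<in>S. card {T \<in> maxtr F' S. v \<in> T} \<le> 1" by simp
      qed
      have lt: "card F' + card (\<Union>F') < card F + card (\<Union>F)" using cF' cU by simp
      have "F' = {} \<or> (\<exists>T. join_tree F' T)"
        using less.hyps[OF lt _ gF'] UF' less.prems(1) by simp
      moreover have "F' \<noteq> {}" using M unfolding F'_def by auto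
      ultimately obtain T' where T': "join_tree F' T'" by auto
      define \<psi> where "\<psi> = inv_into F \<phi>"
      have injpsi: "inj_on \<psi> F'" unfolding \<psi>_def F'_def by (simp add: inj_on_inv_into)
      have psiF: "\<psi> ` F' = F" unfolding \<psi>_def F'_def using inj by (simp add: inv_into_image_cancel)
      have psi1: "\<psi> (\<phi> X) = X" if "X \<in> F" for X unfolding \<psi>_def using inj that by simp
      have "is_tree (\<psi> ` F') ((`) \<psi> ` T')"
        using is_tree_image[OF _ injpsi] T' unfolding join_tree_def by blast
      then have "is_tree F ((`) \<psi> ` T')" unfolding psiF .
      moreover have "connected_in ((`) \<psi> ` T') {e \<in> F. u \<in> e}" for u
      proof (cases "u = v")
        case True
        then show ?thesis using uniq by (intro connected_in_subsing) auto
      next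
        case False
        have eq: "{e \<in> F. u \<in> e} = \<psi> ` {e \<in> F'. u \<in> e}"
        proof
          show "{e \<in> F. u \<in> e} \<subseteq> \<psi> ` {e \<in> F'. u \<in> e}"
          proof
            fix X assume "X \<in> {e \<in> F. u \<in> e}"
            then have "X = \<psi> (\<phi> X)" "\<phi> X \<in> {e \<in> F'. u \<in> e}"
              using psi1 False unfolding F'_def \<phi>_def by auto
            then show "X \<in> \<psi> ` {e \<in> F'. u \<in> e}" by blast
          qed
        next
          show "\<psi> ` {e \<in> F'. u \<in> e} \<subseteq> {e \<in> F. u \<in> e}"
          proof
            fix Y assume "Y \<in> \<psi> ` {e \<in> F'. u \<in> e}"
            then obtain X where X: "X \<in> F" "u \<in> \<phi> X" "Y = \<psi> (\<phi> X)" unfolding F'_def by auto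
            then show "Y \<in> {e \<in> F. u \<in> e}" using psi1 unfolding \<phi>_def by auto
          qed
        qed
        show ?thesis unfolding eq using connected_in_image T' unfolding join_tree_def by blast
      qed
      ultimately show ?thesis unfolding join_tree_def by blast
    qed
  qed
qed


primrec smul :: "nat \<Rightarrow> 'k::comm_monoid_add \<Rightarrow> 'k" where
  "smul 0 c = 0"
| "smul (Suc n) c = c + smul n c"

lemma smul_add: "smul (m + n) c = smul m c + smul n c"
  by (induction m) (auto simp: add.assoc)

lemma sum_smul: "finite A \<Longrightarrow> (\<Sum>r\<in>A. smul n c) = smul (card A * n) c"
  by (induction A rule: finite_induct) (auto simp: smul_add)

definition toggle :: "'a \<Rightarrow> 'a set \<Rightarrow> 'a set" where
  "toggle x A = (if x \<in> A then A - {x} else insert x A)"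

lemma toggle_even: "finite A \<Longrightarrow> even (card (toggle x A)) \<longleftrightarrow> \<not> even (card A)"
proof (cases "x \<in> A")
  case True
  assume f: "finite A"
  have "Suc (card (A - {x})) = card A" using card_Suc_Diff1[OF f True] .
  then show ?thesis unfolding toggle_def using True by (metis even_Suc)
next
  case False
  assume f: "finite A"
  then show ?thesis unfolding toggle_def using False by simp
qed

lemma toggle_toggle: "toggle x (toggle x A) = A"
  unfolding toggle_def by auto

lemma toggle_comm: "toggle x (toggle y A) = toggle y (toggle x A)"
  unfolding toggle_def by auto

lemma toggle_sub: "x \<in> B \<Longrightarrow> A \<subseteq> B \<Longrightarrow> toggle x A \<subseteq> B"
  unfolding toggle_def by auto

lemma toggle_mem: "y \<in> toggle x A \<longleftrightarrow> (if y = x then x \<notin> A else y \<in> A)"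
  unfolding toggle_def by auto

lemma invol_half:
  assumes "finite A" "\<And>a. a \<in> A \<Longrightarrow> \<sigma> a \<in> A" "\<And>a. a \<in> A \<Longrightarrow> \<sigma> (\<sigma> a) = a"
    "\<And>a. a \<in> A \<Longrightarrow> Q (\<sigma> a) \<longleftrightarrow> \<not> Q a"
  shows "2 * card {a \<in> A. Q a} = card A"
proof -
  have "bij_betw \<sigma> {a \<in> A. Q a} {a \<in> A. \<not> Q a}"
  proof (rule bij_betw_byWitness[where f'=\<sigma>])
    show "\<forall>a\<in>{a \<in> A. Q a}. \<sigma> (\<sigma> a) = a" using assms(3) by blast
    show "\<forall>a'\<in>{a \<in> A. \<not> Q a}. \<sigma> (\<sigma> a') = a'" using assms(3) by blast
    show "\<sigma> ` {a \<in> A. Q a} \<subseteq> {a \<in> A. \<not> Q a}" using assms(2,4) by blast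
    show "\<sigma> ` {a \<in> A. \<not> Q a} \<subseteq> {a \<in> A. Q a}" using assms(2,4) by blast
  qed
  then have "card {a \<in> A. Q a} = card {a \<in> A. \<not> Q a}" by (rule bij_betw_same_card)
  moreover have "card A = card {a \<in> A. Q a} + card {a \<in> A. \<not> Q a}"
  proof -
    have e: "A = {a \<in> A. Q a} \<union> {a \<in> A. \<not> Q a}" by blast
    have "card ({a \<in> A. Q a} \<union> {a \<in> A. \<not> Q a}) = card {a \<in> A. Q a} + card {a \<in> A. \<not> Q a}"
      by (rule card_Un_disjoint) (use assms(1) in auto)
    then show ?thesis using e by simp
  qed
  ultimately show ?thesis by simp
qed

lemma pos_sum_nz:
  fixes f :: "'a \<Rightarrow> 'k::comm_monoid_add"
  assumes pos: "\<forall>p q::'k. p + q = 0 \<longrightarrow> p = 0 \<and> q = 0"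
    and "finite A" "a \<in> A" "f a \<noteq> 0"
  shows "sum f A \<noteq> 0"
proof
  assume "sum f A = 0"
  then have h: "f a + sum f (A - {a}) = 0" using sum.remove[OF assms(2,3), of f] by simp
  show False using pos[rule_format, OF h] assms(4) by simp
qed

lemma smul_nz:
  fixes c :: "'k::comm_monoid_add"
  assumes pos: "\<forall>p q::'k. p + q = 0 \<longrightarrow> p = 0 \<and> q = 0" and "c \<noteq> 0" "n > 0"
  shows "smul n c \<noteq> 0"
proof (cases n)
  case 0 then show ?thesis using assms(3) by simp
next
  case (Suc m)
  show ?thesis
  proof
    assume "smul n c = 0"
    then have h: "c + smul m c = 0" using Suc by simp
    show False using pos[rule_format, OF h] assms(2) by simp
  qed
qed

locale constr =
  fixes V :: "'v set" and E :: "'v set set" and S :: "'v set"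
    and enc :: "'v set set \<Rightarrow> 'd" and T0 :: "'v set" and v0 :: 'v and c :: "'k::comm_monoid_add"
  assumes finV: "finite V" and EV: "\<And>X. X \<in> E \<Longrightarrow> X \<subseteq> V" and SE: "S \<subseteq> \<Union>E"
    and deg2: "\<And>v. v \<in> S \<Longrightarrow> 2 \<le> card {T \<in> maxtr E S. v \<in> T}"
    and inj: "inj_on enc (Pow (maxtr E S))"
    and T0: "T0 \<in> maxtr E S" and v0: "v0 \<in> T0"
    and pos: "\<forall>p q::'k. p + q = 0 \<longrightarrow> p = 0 \<and> q = 0" and cnz: "c \<noteq> 0"
begin

abbreviation "F \<equiv> maxtr E S"
definition "Fv v = {T \<in> F. v \<in> T}"
definition "D v = {A. A \<subseteq> Fv v \<and> even (card A)}"
definition "Dom v = enc ` D v"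
definition "dec = the_inv_into (Pow F) enc"
definition "cnt T t = card {v \<in> T. T \<in> dec (t v)}"
definition "parT T t \<longleftrightarrow> (T \<in> F \<longrightarrow> (odd (cnt T t) \<longleftrightarrow> T = T0))"
definition "P A = (\<Prod>w\<in>A. card (Dom w))"
definition "aa X = (if X \<inter> S \<in> F then 2 else (1::nat))"
definition "NX X = aa X * P (V - X)"
definition "R X t = (if t \<in> PiE X Dom \<and> parT (X \<inter> S) t then smul (NX X) c else 0)"
definition "kW X Y = (if X \<inter> S = Y \<inter> S then aa X else aa X * aa Y)"
definition "W X Y t = (if t \<in> PiE (X \<union> Y) Dom \<and> parT (X \<inter> S) t \<and> parT (Y \<inter> S) t
   then smul (kW X Y * P (V - (X \<union> Y))) c else 0)"

lemma finE: "finite E"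
  using finV EV by (meson Pow_iff finite_Pow_iff finite_subset subsetI)

lemma finF: "finite F"
  unfolding maxtr_def tr_def using finE by simp

lemma F_sub: "T \<in> F \<Longrightarrow> T \<subseteq> S"
  unfolding maxtr_def tr_def by auto

lemma F_tr: "T \<in> F \<Longrightarrow> \<exists>X\<in>E. X \<inter> S = T"
  unfolding maxtr_def tr_def by auto

lemma F_max: "T \<in> F \<Longrightarrow> X \<in> E \<Longrightarrow> T \<subseteq> X \<inter> S \<Longrightarrow> T = X \<inter> S"
  unfolding maxtr_def tr_def by auto

lemma D_sub: "D v \<subseteq> Pow F"
  unfolding D_def Fv_def by auto

lemma finD: "finite (D v)"
  using D_sub finF by (meson finite_Pow_iff finite_subset)

lemma finDom: "finite (Dom v)"
  unfolding Dom_def using finD by simp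

lemma empty_D: "{} \<in> D v"
  unfolding D_def by simp

lemma card_Dom_pos: "card (Dom v) > 0"
  using finDom empty_D unfolding Dom_def by (auto simp: card_gt_0_iff)

lemma P_pos: "P A > 0"
  unfolding P_def using card_Dom_pos by (simp add: prod_pos)

lemma dec_enc: "x \<in> Pow F \<Longrightarrow> dec (enc x) = x"
  unfolding dec_def using inj by (simp add: the_inv_into_f_f)

lemma dec_Dom: "y \<in> Dom v \<Longrightarrow> dec y \<in> D v \<and> enc (dec y) = y"
proof -
  assume "y \<in> Dom v"
  then obtain x where x: "x \<in> D v" "y = enc x" unfolding Dom_def by auto
  then have "dec y = x" using dec_enc D_sub by blast
  then show ?thesis using x by simp
qed

lemma parT_local:
  assumes "\<And>v. v \<in> T \<Longrightarrow> t v = t' v"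
  shows "parT T t = parT T t'"
proof -
  have "{v \<in> T. T \<in> dec (t v)} = {v \<in> T. T \<in> dec (t' v)}" using assms by auto
  then show ?thesis unfolding parT_def cnt_def by simp
qed

lemma Ext_card:
  assumes t0: "t0 \<in> PiE X Dom" and fY: "finite Y"
  shows "card {r \<in> PiE (X \<union> Y) Dom. restrict r X = t0} = P (Y - X)"
proof -
  let ?A = "{r \<in> PiE (X \<union> Y) Dom. restrict r X = t0}"
  let ?g = "\<lambda>u v. if v \<in> X then t0 v else u v"
  have "bij_betw (\<lambda>r. restrict r (Y - X)) ?A (PiE (Y - X) Dom)"
  proof (rule bij_betw_byWitness[where f'="?g"])
    show "\<forall>a\<in>?A. ?g (restrict a (Y - X)) = a"
    proof
      fix r assume r: "r \<in> ?A"
      show "?g (restrict r (Y - X)) = r"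
      proof
        fix v
        have rX: "restrict r X = t0" and rP: "r \<in> PiE (X \<union> Y) Dom" using r by auto
        show "?g (restrict r (Y - X)) v = r v"
        proof (cases "v \<in> X")
          case True then show ?thesis using fun_cong[OF rX, of v] by simp
        next
          case False then show ?thesis using rP by (cases "v \<in> Y") (auto simp: PiE_iff extensional_def)
        qed
      qed
    qed
    show "\<forall>a'\<in>PiE (Y - X) Dom. restrict (?g a') (Y - X) = a'"
      by (auto simp: PiE_iff extensional_def restrict_def fun_eq_iff)
    show "(\<lambda>r. restrict r (Y - X)) ` ?A \<subseteq> PiE (Y - X) Dom"
      unfolding image_subset_iff restrict_PiE_iff by (auto simp: PiE_iff)
    show "?g ` PiE (Y - X) Dom \<subseteq> ?A"
      using t0 by (auto simp: PiE_iff extensional_def restrict_def fun_eq_iff)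
  qed
  then have "card ?A = card (PiE (Y - X) Dom)" by (rule bij_betw_same_card)
  also have "\<dots> = P (Y - X)" unfolding P_def using fY by (simp add: card_PiE)
  finally show ?thesis .
qed


lemma Fv_other:
  assumes "w \<in> S" "T \<in> Fv w"
  shows "\<exists>T'\<in>Fv w. T' \<noteq> T"
proof (rule ccontr)
  assume "\<not> ?thesis"
  then have "Fv w \<subseteq> {T}" by blast
  then have "card (Fv w) \<le> card {T}" by (intro card_mono) auto
  then have "card (Fv w) \<le> 1" by simp
  moreover have "2 \<le> card (Fv w)" using deg2[OF assms(1)] unfolding Fv_def .
  ultimately show False by simp
qed

lemma finite_Fv_sub: "a \<subseteq> Fv w \<Longrightarrow> finite a"
proof -
  assume a: "a \<subseteq> Fv w"
  have "Fv w \<subseteq> F" unfolding Fv_def by blast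
  then show ?thesis using finite_subset[of a F] finF a by blast
qed

lemma half_count:
  assumes t0: "t0 \<in> PiE X Dom" and fX: "finite X" and fY: "finite Y" and TF: "Y \<inter> S \<in> F"
    and w: "w \<in> Y \<inter> S" "w \<notin> X"
  shows "2 * card {r \<in> {r \<in> PiE (X \<union> Y) Dom. restrict r X = t0}. parT (Y \<inter> S) r} = P (Y - X)"
proof -
  define T where "T = Y \<inter> S"
  define A where "A = {r \<in> PiE (X \<union> Y) Dom. restrict r X = t0}"
  have TFv: "T \<in> Fv w" unfolding Fv_def T_def using TF w by auto
  obtain T' where T': "T' \<in> Fv w" "T' \<noteq> T" using Fv_other[OF _ TFv] w by auto
  define \<sigma> where "\<sigma> r = r(w := enc (toggle T' (toggle T (dec (r w)))))" for r :: "'v \<Rightarrow> 'd"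
  have wXY: "w \<in> X \<union> Y" using w by auto
  have Dtog: "toggle T' (toggle T a) \<in> D w" if "a \<in> D w" for a
  proof -
    have s: "a \<subseteq> Fv w" "even (card a)" using that unfolding D_def by auto
    have s2: "toggle T a \<subseteq> Fv w" using toggle_sub[OF TFv s(1)] .
    have s3: "toggle T' (toggle T a) \<subseteq> Fv w" using toggle_sub[OF T'(1) s2] .
    have "even (card (toggle T' (toggle T a)))"
      using toggle_even[OF finite_Fv_sub[OF s2], of T'] toggle_even[OF finite_Fv_sub[OF s(1)], of T] s(2)
      by simp
    then show ?thesis using s3 unfolding D_def by simp
  qed
  have rw: "dec (r w) \<in> D w \<and> enc (dec (r w)) = r w" if "r \<in> A" for r
    using that wXY dec_Dom unfolding A_def by (auto simp: PiE_iff)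
  have decs: "dec (\<sigma> r w) = toggle T' (toggle T (dec (r w)))" if "r \<in> A" for r
  proof -
    have "toggle T' (toggle T (dec (r w))) \<in> Pow F" using Dtog[OF conjunct1[OF rw[OF that]]] D_sub by blast
    then show ?thesis unfolding \<sigma>_def by (simp add: dec_enc)
  qed
  have sA: "\<sigma> r \<in> A" if r: "r \<in> A" for r
  proof -
    have "enc (toggle T' (toggle T (dec (r w)))) \<in> Dom w"
      unfolding Dom_def using Dtog rw[OF r] by blast
    then have "\<sigma> r \<in> PiE (X \<union> Y) Dom" using r wXY unfolding A_def \<sigma>_def by (auto simp: PiE_iff extensional_def)
    moreover have "restrict (\<sigma> r) X = restrict r X" using w(2) unfolding \<sigma>_def by (auto simp: restrict_def fun_eq_iff)
    then have "restrict (\<sigma> r) X = t0" using r unfolding A_def by simp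
    ultimately show ?thesis unfolding A_def by simp
  qed
  have ss: "\<sigma> (\<sigma> r) = r" if r: "r \<in> A" for r
  proof -
    have "toggle T' (toggle T (toggle T' (toggle T (dec (r w))))) = toggle T' (toggle T' (toggle T (toggle T (dec (r w)))))"
      by (subst toggle_comm[of T T']) (rule refl)
    then have "toggle T' (toggle T (toggle T' (toggle T (dec (r w))))) = dec (r w)"
      by (simp only: toggle_toggle)
    then have "\<sigma> (\<sigma> r) = r(w := enc (dec (r w)))"
      unfolding \<sigma>_def[of "\<sigma> r"] decs[OF r] unfolding \<sigma>_def by simp
    then show ?thesis using rw[OF r] by simp
  qed
  have finT: "finite T" unfolding T_def using fY by simp
  have sp: "parT T (\<sigma> r) \<longleftrightarrow> \<not> parT T r" if r: "r \<in> A" for r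
  proof -
    have memw: "T \<in> dec (\<sigma> r w) \<longleftrightarrow> T \<notin> dec (r w)"
      unfolding decs[OF r] using T'(2) by (simp add: toggle_mem)
    have wT: "w \<in> T" using w unfolding T_def by simp
    have pt: "v \<in> {v \<in> T. T \<in> dec (\<sigma> r v)} \<longleftrightarrow> v \<in> toggle w {v \<in> T. T \<in> dec (r v)}" for v
    proof (cases "v = w")
      case True
      then show ?thesis using memw wT by (simp add: toggle_mem)
    next
      case False
      then have "\<sigma> r v = r v" unfolding \<sigma>_def by simp
      then show ?thesis using False by (simp add: toggle_mem)
    qed
    have eq: "{v \<in> T. T \<in> dec (\<sigma> r v)} = toggle w {v \<in> T. T \<in> dec (r v)}"
      using pt by blast
    have "even (cnt T (\<sigma> r)) \<longleftrightarrow> \<not> even (cnt T r)"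
      unfolding cnt_def eq by (rule toggle_even) (use finT in simp)
    then show ?thesis unfolding parT_def using TF T_def by auto
  qed
  have finA: "finite A" unfolding A_def using fX fY finDom
    by (intro finite_subset[OF _ finite_PiE[of "X \<union> Y" Dom]]) auto
  have "2 * card {r \<in> A. parT T r} = card A"
    by (rule invol_half[where Q="parT T", OF finA sA ss sp])
  also have "\<dots> = P (Y - X)" unfolding A_def by (rule Ext_card[OF t0 fY])
  finally show ?thesis unfolding A_def T_def .
qed


lemma finE_mem: "X \<in> E \<Longrightarrow> finite X"
  using EV finV finite_subset by blast

lemma aa_pos: "aa X > 0"
  unfolding aa_def by simp

lemma W_sym: "W X Y = W Y X"
proof -
  have "kW X Y = kW Y X" unfolding kW_def aa_def by (auto simp: mult.commute)
  moreover have u: "Y \<union> X = X \<union> Y" by blast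
  ultimately show ?thesis unfolding W_def by (auto simp: fun_eq_iff)
qed

lemma P_split:
  assumes "X \<subseteq> V" "Y \<subseteq> V"
  shows "P (V - (X \<union> Y)) * P (Y - X) = P (V - X)"
proof -
  have "V - X = (V - (X \<union> Y)) \<union> (Y - X)" using assms by auto
  moreover have "(V - (X \<union> Y)) \<inter> (Y - X) = {}" by auto
  moreover have "P ((V - (X \<union> Y)) \<union> (Y - X)) = P (V - (X \<union> Y)) * P (Y - X)"
    unfolding P_def by (rule prod.union_disjoint) (use finV assms(2) finite_subset in auto)
  ultimately show ?thesis by simp
qed

lemma marg_W:
  assumes X: "X \<in> E" and Y: "Y \<in> E"
  shows "marginal (W X Y) X = R X"
proof
  fix t0
  define NW where "NW = kW X Y * P (V - (X \<union> Y))"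
  have NWpos: "NW > 0" unfolding NW_def kW_def using aa_pos P_pos by simp
  define Z where "Z = {r \<in> PiE (X \<union> Y) Dom. parT (X \<inter> S) r \<and> parT (Y \<inter> S) r \<and> restrict r X = t0}"
  have fX: "finite X" and fY: "finite Y" using finE_mem X Y by auto
  have XV: "X \<subseteq> V" and YV: "Y \<subseteq> V" using EV X Y by auto
  have Wnz: "smul NW c \<noteq> 0" using smul_nz[OF pos cnz NWpos] .
  have seteq: "{r. W X Y r \<noteq> 0 \<and> restrict r X = t0} = Z"
    unfolding Z_def W_def NW_def[symmetric] using Wnz by auto
  have finZ: "finite Z" unfolding Z_def using fX fY finDom
    by (intro finite_subset[OF _ finite_PiE[of "X \<union> Y" Dom]]) auto
  have "marginal (W X Y) X t0 = (\<Sum>r\<in>Z. W X Y r)"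
    unfolding marginal_def seteq ..
  also have "\<dots> = (\<Sum>r\<in>Z. smul NW c)"
    by (rule sum.cong) (auto simp: Z_def W_def NW_def)
  also have "\<dots> = smul (card Z * NW) c" using finZ by (rule sum_smul)
  finally have m: "marginal (W X Y) X t0 = smul (card Z * NW) c" .
  show "marginal (W X Y) X t0 = R X t0"
  proof (cases "t0 \<in> PiE X Dom \<and> parT (X \<inter> S) t0")
    case False
    have "Z = {}"
    proof (rule ccontr)
      assume "Z \<noteq> {}"
      then obtain r where r: "r \<in> Z" by blast
      then have rP: "r \<in> PiE (X \<union> Y) Dom" "parT (X \<inter> S) r" "restrict r X = t0" unfolding Z_def by auto
      have "t0 \<in> PiE X Dom" using rP(1,3) unfolding restrict_PiE_iff[of r X Dom, symmetric] by (auto simp: PiE_iff)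
      moreover have "parT (X \<inter> S) t0"
        using rP(2) parT_local[of "X \<inter> S" r t0] rP(3) by (auto simp: restrict_def)
      ultimately show False using False by simp
    qed
    moreover have "R X t0 = 0" unfolding R_def by (rule if_not_P[OF False])
    ultimately show ?thesis using m by simp
  next
    case True
    then have t0P: "t0 \<in> PiE X Dom" and t0par: "parT (X \<inter> S) t0" by auto
    define Ext where "Ext = {r \<in> PiE (X \<union> Y) Dom. restrict r X = t0}"
    have parX: "parT (X \<inter> S) r" if "r \<in> Ext" for r
    proof -
      have "restrict r X = t0" using that unfolding Ext_def by simp
      then have "\<And>v. v \<in> X \<inter> S \<Longrightarrow> r v = t0 v" by (metis IntD1 restrict_apply')
      then show ?thesis using parT_local[of "X \<inter> S" r t0] t0par by simp
    qed
    have Zeq: "Z = {r \<in> Ext. parT (Y \<inter> S) r}" unfolding Z_def Ext_def using parX Ext_def by auto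
    have cExt: "card Ext = P (Y - X)" unfolding Ext_def by (rule Ext_card[OF t0P fY])
    have PP: "P (V - (X \<union> Y)) * P (Y - X) = P (V - X)" by (rule P_split[OF XV YV])
    have "card Z * NW = NX X"
    proof (cases "X \<inter> S = Y \<inter> S")
      case True
      have "Z = Ext" unfolding Zeq using parX True by auto
      then show ?thesis unfolding NW_def NX_def kW_def using True cExt PP
        by (simp add: algebra_simps)
    next
      case neq: False
      show ?thesis
      proof (cases "Y \<inter> S \<in> F")
        case False
        have "Z = Ext" unfolding Zeq using False unfolding parT_def by auto
        moreover have "aa Y = 1" unfolding aa_def using False by simp
        ultimately show ?thesis unfolding NW_def NX_def kW_def using neq cExt PP
          by (simp add: algebra_simps)
      next
        case True
        have "\<not> Y \<inter> S \<subseteq> X"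
        proof
          assume "Y \<inter> S \<subseteq> X"
          then have "Y \<inter> S \<subseteq> X \<inter> S" by auto
          then have "Y \<inter> S = X \<inter> S" using F_max[OF True X] by simp
          then show False using neq by simp
        qed
        then obtain w where w: "w \<in> Y \<inter> S" "w \<notin> X" by blast
        have h: "2 * card Z = P (Y - X)"
          unfolding Zeq Ext_def by (rule half_count[OF t0P fX fY True w])
        have "aa Y = 2" unfolding aa_def using True by simp
        then have "card Z * NW = aa X * P (V - (X \<union> Y)) * (2 * card Z)"
          unfolding NW_def kW_def using neq by (simp add: algebra_simps)
        also have "\<dots> = NX X" unfolding h NX_def using PP by (simp add: algebra_simps)
        finally show ?thesis .
      qed
    qed
    then show ?thesis using m True unfolding R_def by simp
  qed
qed


lemma krel_R: "X \<in> E \<Longrightarrow> is_krel Dom X (R X)"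
proof -
  assume X: "X \<in> E"
  have "{t. R X t \<noteq> 0} \<subseteq> PiE X Dom" unfolding R_def by (auto split: if_splits)
  moreover have "finite (PiE X Dom)" using finE_mem[OF X] finDom by (intro finite_PiE) auto
  ultimately have "finite {t. R X t \<noteq> 0}" by (rule finite_subset)
  then show ?thesis unfolding is_krel_def using \<open>{t. R X t \<noteq> 0} \<subseteq> PiE X Dom\<close> by blast
qed

lemma pair_cons:
  assumes X: "X \<in> E" and Y: "Y \<in> E"
  shows "consistent_on Dom {X, Y} R"
proof -
  have sub: "{t. W X Y t \<noteq> 0} \<subseteq> PiE (X \<union> Y) Dom" unfolding W_def by (auto split: if_splits)
  moreover have "finite (PiE (X \<union> Y) Dom)" using finE_mem[OF X] finE_mem[OF Y] finDom
    by (intro finite_PiE) auto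
  ultimately have "finite {t. W X Y t \<noteq> 0}" by (rule finite_subset)
  then have "is_krel Dom (\<Union>{X, Y}) (W X Y)" unfolding is_krel_def using sub by auto
  moreover have "marginal (W X Y) X = R X" by (rule marg_W[OF X Y])
  moreover have "marginal (W X Y) Y = R Y" using marg_W[OF Y X] W_sym[of X Y] by simp
  ultimately show ?thesis unfolding consistent_on_def by blast
qed

lemma card_filter_sum: "finite A \<Longrightarrow> card {x \<in> A. Q x} = (\<Sum>x\<in>A. if Q x then 1 else 0::nat)"
  by (simp add: sum.inter_filter[symmetric])

lemma not_global: "\<not> consistent_on Dom E R"
proof
  assume "consistent_on Dom E R"
  then obtain W0 where krel: "is_krel Dom (\<Union>E) W0" and mar: "\<And>X. X \<in> E \<Longrightarrow> marginal W0 X = R X"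
    unfolding consistent_on_def by blast
  have finW: "finite {t. W0 t \<noteq> 0}" and Wsub: "\<And>t. W0 t \<noteq> 0 \<Longrightarrow> t \<in> PiE (\<Union>E) Dom"
    using krel unfolding is_krel_def by auto
  obtain X0 where X0: "X0 \<in> E" "X0 \<inter> S = T0" using F_tr[OF T0] by blast
  have v0S: "v0 \<in> X0 \<inter> S" using v0 X0 by auto
  have hc: "2 * card {r \<in> {r \<in> PiE ({} \<union> X0) Dom. restrict r {} = (\<lambda>x. undefined)}. parT (X0 \<inter> S) r}
      = P (X0 - {})"
    by (rule half_count) (use finE_mem[OF X0(1)] X0 T0 v0S in auto)
  then have "card {r \<in> {r \<in> PiE ({} \<union> X0) Dom. restrict r {} = (\<lambda>x. undefined)}. parT (X0 \<inter> S) r} > 0"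
    using P_pos[of "X0 - {}"] by linarith
  then have "{r \<in> {r \<in> PiE ({} \<union> X0) Dom. restrict r {} = (\<lambda>x. undefined)}. parT (X0 \<inter> S) r} \<noteq> {}"
    by (metis card.empty less_irrefl)
  then obtain r where r0: "r \<in> PiE ({} \<union> X0) Dom" "parT (X0 \<inter> S) r" by blast
  then have r: "r \<in> PiE X0 Dom" "parT (X0 \<inter> S) r" by auto
  have NXpos: "NX X0 > 0" unfolding NX_def using aa_pos P_pos by simp
  have "R X0 r \<noteq> 0" unfolding R_def using r smul_nz[OF pos cnz NXpos] by simp
  then have "marginal W0 X0 r \<noteq> 0" using mar[OF X0(1)] by simp
  then have "sum W0 {r'. W0 r' \<noteq> 0 \<and> restrict r' X0 = r} \<noteq> 0" unfolding marginal_def .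
  then have "{r'. W0 r' \<noteq> 0 \<and> restrict r' X0 = r} \<noteq> {}" by (metis sum.empty)
  then obtain w0 where w0: "W0 w0 \<noteq> 0" by blast
  have w0P: "w0 \<in> PiE (\<Union>E) Dom" using Wsub[OF w0] .
  have hT: "odd (cnt T w0) \<longleftrightarrow> T = T0" if T: "T \<in> F" for T
  proof -
    obtain XT where XT: "XT \<in> E" "XT \<inter> S = T" using F_tr[OF T] by blast
    let ?A = "{r'. W0 r' \<noteq> 0 \<and> restrict r' XT = restrict w0 XT}"
    have "finite ?A" using finW by (rule finite_subset[rotated]) auto
    moreover have "w0 \<in> ?A" using w0 by simp
    ultimately have "sum W0 ?A \<noteq> 0" using pos_sum_nz[OF pos, of ?A w0 W0] w0 by blast
    moreover have "sum W0 ?A = R XT (restrict w0 XT)"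
      using mar[OF XT(1)] unfolding marginal_def by (rule fun_cong)
    ultimately have "R XT (restrict w0 XT) \<noteq> 0" by simp
    then have "parT (XT \<inter> S) (restrict w0 XT)" unfolding R_def by (auto split: if_splits)
    moreover have "parT (XT \<inter> S) (restrict w0 XT) = parT (XT \<inter> S) w0"
      by (rule parT_local) simp
    ultimately have "parT T w0" using XT by simp
    then show ?thesis unfolding parT_def using T by simp
  qed
  define y where "y v = dec (w0 v)" for v
  have finS: "finite S" using SE finV EV by (meson Union_least finite_subset)
  have yD: "y v \<in> D v" if "v \<in> S" for v
  proof -
    have "v \<in> \<Union>E" using that SE by blast
    then have "w0 v \<in> Dom v" using w0P by (auto simp: PiE_iff)
    then show ?thesis unfolding y_def using dec_Dom by blast
  qed
  have c1: "cnt T w0 = (\<Sum>v\<in>S. if v \<in> T \<and> T \<in> y v then 1 else 0)" if T: "T \<in> F" for T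
  proof -
    have "{v \<in> T. T \<in> dec (w0 v)} = {v \<in> S. v \<in> T \<and> T \<in> y v}" using F_sub[OF T] unfolding y_def by auto
    then show ?thesis unfolding cnt_def using card_filter_sum[OF finS] by simp
  qed
  have c2: "(\<Sum>T\<in>F. if v \<in> T \<and> T \<in> y v then 1 else 0) = card (y v)" if v: "v \<in> S" for v
  proof -
    have "{T \<in> F. v \<in> T \<and> T \<in> y v} = y v" using yD[OF v] unfolding D_def Fv_def by auto
    then show ?thesis using card_filter_sum[OF finF, of "\<lambda>T. v \<in> T \<and> T \<in> y v"] by simp
  qed
  have "(\<Sum>T\<in>F. cnt T w0) = (\<Sum>T\<in>F. \<Sum>v\<in>S. if v \<in> T \<and> T \<in> y v then 1 else 0)"
    using c1 by simp
  also have "\<dots> = (\<Sum>v\<in>S. \<Sum>T\<in>F. if v \<in> T \<and> T \<in> y v then 1 else 0)" by (rule sum.swap)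
  also have "\<dots> = (\<Sum>v\<in>S. card (y v))" using c2 by simp
  finally have dc: "(\<Sum>T\<in>F. cnt T w0) = (\<Sum>v\<in>S. card (y v))" .
  have ev: "even (\<Sum>v\<in>S. card (y v))" by (rule dvd_sum) (use yD in \<open>auto simp: D_def\<close>)
  have "(\<Sum>T\<in>F. cnt T w0) = cnt T0 w0 + (\<Sum>T\<in>F - {T0}. cnt T w0)"
    using sum.remove[OF finF T0] by simp
  moreover have "even (\<Sum>T\<in>F - {T0}. cnt T w0)" by (rule dvd_sum) (use hT in auto)
  moreover have "odd (cnt T0 w0)" using hT T0 by simp
  ultimately have "odd (\<Sum>T\<in>F. cnt T w0)" by simp
  then show False using dc ev by simp
qed

end


theorem theorem5:
  fixes V :: "'v set" and E :: "'v set set"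
  assumes "positive_monoid TYPE('k::comm_monoid_add)"
    and "infinite (UNIV :: 'd set)"
    and "hypergraph V E"
    and "local_to_global TYPE('k) TYPE('d) E"
  shows "acyclic_hg E"
proof (rule ccontr)
  assume na: "\<not> acyclic_hg E"
  have finV: "finite V" and EV: "\<And>X. X \<in> E \<Longrightarrow> X \<subseteq> V"
    using assms(3) unfolding hypergraph_def by auto
  have finU: "finite (\<Union>E)" using finV EV by (meson Union_least finite_subset)
  have "\<not> goodQ E"
  proof
    assume "goodQ E"
    then have "E = {} \<or> (\<exists>T. join_tree E T)" by (rule goodQ_acyclic[OF finU])
    then show False using na unfolding acyclic_hg_def by blast
  qed
  then obtain S where S: "S \<subseteq> \<Union>E" "S \<noteq> {}"
    and deg: "\<And>v. v \<in> S \<Longrightarrow> \<not> card {T \<in> maxtr E S. v \<in> T} \<le> 1"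
    unfolding goodQ_def by blast
  have deg2: "\<And>v. v \<in> S \<Longrightarrow> 2 \<le> card {T \<in> maxtr E S. v \<in> T}"
  proof -
    fix v assume "v \<in> S"
    then have "\<not> card {T \<in> maxtr E S. v \<in> T} \<le> 1" by (rule deg)
    then show "2 \<le> card {T \<in> maxtr E S. v \<in> T}" by linarith
  qed
  obtain v0 where v0: "v0 \<in> S" using S(2) by blast
  have "{T \<in> maxtr E S. v0 \<in> T} \<noteq> {}"
  proof
    assume "{T \<in> maxtr E S. v0 \<in> T} = {}"
    then have "card {T \<in> maxtr E S. v0 \<in> T} = 0" by (simp only: card.empty)
    then show False using deg2[OF v0] by linarith
  qed
  then obtain T0 where T0: "T0 \<in> maxtr E S" "v0 \<in> T0" by blast
  obtain c :: 'k where pos: "\<forall>p q::'k. p + q = 0 \<longrightarrow> p = 0 \<and> q = 0" and cnz: "c \<noteq> 0"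
    using assms(1) unfolding positive_monoid_def by blast
  have finE: "finite E" using finV EV by (meson Pow_iff finite_Pow_iff finite_subset subsetI)
  have finM: "finite (Pow (maxtr E S))" unfolding maxtr_def tr_def using finE by simp
  obtain B :: "'d set" where B: "finite B" "card B = card (Pow (maxtr E S))"
    using infinite_arbitrarily_large[OF assms(2)] by blast
  obtain h where h: "bij_betw h (Pow (maxtr E S)) B"
    using finite_same_card_bij[OF finM B(1) B(2)[symmetric]] by blast
  have injh: "inj_on h (Pow (maxtr E S))" using h by (rule bij_betw_imp_inj_on)
  interpret C: constr V E S h T0 v0 c
    using finV EV S(1) deg2 injh T0 pos cnz by unfold_locales blast+
  have "consistent_on C.Dom E C.R"
    using assms(4) C.krel_R C.pair_cons unfolding local_to_global_def by blast
  then show False using C.not_global by blast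
qed

end
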